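(* Let $C>0$ and for each $A>1$ let $\mathcal{E}_A=\{(X,M): X=(\mathbf f,\mathbf g,\mathbf F,\mathbf G,\mathbf u,\mathbf v)\in\mathbb{R}^6,\ \mathbf u,\mathbf v>0,\ 1\le\mathbf u\mathbf v\le A,\ \mathbf f^2\le\mathbf F\mathbf v,\ \mathbf g^2\le\mathbf G\mathbf u,\ 0\le M\le1\}$ and let $\mathcal{B}_A:\mathcal{E}_A\to\mathbb{R}$ be functions such that (i) $0\le\mathcal{B}_A(X,M)\le CA\mathbf F^{1/2}\mathbf G^{1/2}$ on $\mathcal{E}_A$, and (ii) for all $(X,M),(X_1,M_1),(X_2,M_2)\in\mathcal{E}_A$ with $X=(X_1+X_2)/2$ and $\mathbf d:=M-(M_1+M_2)/2\ge0$, \[ \mathcal{B}_A(X,M)-\tfrac12\left(\mathcal{B}_A(X_1,M_1)+\mathcal{B}_A(X_2,M_2)\right)\ge\mathbf d\,|\mathbf f|\,|\mathbf g_1-\mathbf g_2|, \] where $\mathbf f$ is the first coordinate of $X$ and $\mathbf g_i$ the second coordinate of $X_i$. Fix $A>1$, $n\ge1$ and a dyadic interval $I_0\subset\mathbb{R}$, and suppose that for every $I\in\operatorname{chld}_k(I_0)$, $0\le k\le n$, points $(X_I,M_I)\in\mathcal{E}_A$, $X_I=(\mathbf f_I,\mathbf g_I,\mathbf F_I,\mathbf G_I,\mathbf u_I,\mathbf v_I)$, are given such that $X_I=(X_{I_1}+X_{I_2})/2$ for every $I\in\operatorname{chld}_k(I_0)$, $0\le k<n$, with children $I_1,I_2$;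 $M_I=(M_{I_1}+M_{I_2})/2$ for every such $I\neq I_0$; and $\mathbf d_{I_0}:=M_{I_0}-2^{-n}\sum_{I\in\operatorname{chld}_n(I_0)}M_I\ge0$. Then, with $A'=4.5A$, \[ \mathbf d_{I_0}\,|\mathbf f_{I_0}|\Bigl(2^{-n}\!\!\sum_{I\in\operatorname{chld}_n(I_0)}|\mathbf g_I-\mathbf g_{I_0}|\Bigr)\le 36\Bigl(\mathcal{B}_{A'}(X_{I_0},M_{I_0})-2^{-n}\!\!\sum_{I\in\operatorname{chld}_n(I_0)}\mathcal{B}_{A'}(X_I,M_I)\Bigr). \]
   Context: For a dyadic interval $I$, $\operatorname{chld}_0(I)=\{I\}$ and $\operatorname{chld}_k(I)$ is the set of the $2^k$ dyadic subintervals of $I$ of length $2^{-k}|I|$. Note $\mathcal{E}_A\subset\mathcal{E}_{A'}$ for $A\le A'$. *)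

theory Defs
  imports "HOL-Analysis.Analysis"
begin

type_synonym pt = "real \<times> real \<times> real \<times> real \<times> real \<times> real"

definition cf :: "pt \<Rightarrow> real" where "cf X = fst X"
definition cg :: "pt \<Rightarrow> real" where "cg X = fst (snd X)"
definition cF :: "pt \<Rightarrow> real" where "cF X = fst (snd (snd X))"
definition cG :: "pt \<Rightarrow> real" where "cG X = fst (snd (snd (snd X)))"
definition cu :: "pt \<Rightarrow> real" where "cu X = fst (snd (snd (snd (snd X))))"
definition cv :: "pt \<Rightarrow> real" where "cv X = snd (snd (snd (snd (snd X))))"

definition inE :: "real \<Rightarrow> pt \<Rightarrow> real \<Rightarrow> bool" where
  "inE A X M \<longleftrightarrow> cu X > 0 \<and> cv X > 0 \<and> 1 \<le> cu X * cv X \<and> cu X * cv X \<le> A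
     \<and> (cf X)\<^sup>2 \<le> cF X * cv X \<and> (cg X)\<^sup>2 \<le> cG X * cu X \<and> 0 \<le> M \<and> M \<le> 1"

end

theory Submission
  imports Defs
begin

lemma coord_lin:
  "cf (x + y) = cf x + cf y" "cg (x + y) = cg x + cg y" "cF (x + y) = cF x + cF y"
  "cG (x + y) = cG x + cG y" "cu (x + y) = cu x + cu y" "cv (x + y) = cv x + cv y"
  "cf (c *\<^sub>R x) = c * cf x" "cg (c *\<^sub>R x) = c * cg x" "cF (c *\<^sub>R x) = c * cF x"
  "cG (c *\<^sub>R x) = c * cG x" "cu (c *\<^sub>R x) = c * cu x" "cv (c *\<^sub>R x) = c * cv x"
  by (simp_all add: cf_def cg_def cF_def cG_def cu_def cv_def)

lemma coord_sum:
  "cf (sum h S) = (\<Sum>i\<in>S. cf (h i))" "cg (sum h S) = (\<Sum>i\<in>S. cg (h i))"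
  "cu (sum h S) = (\<Sum>i\<in>S. cu (h i))" "cv (sum h S) = (\<Sum>i\<in>S. cv (h i))"
  by (simp_all add: cf_def cg_def cu_def cv_def fst_sum snd_sum)

lemma quad9:
  fixes a1 a2 b1 b2 c t :: real
  assumes "0 \<le> a1" "0 \<le> a2" "0 \<le> b1" "0 \<le> b2" "a1*b1 \<le> c" "a2*b2 \<le> c"
    "(a1+a2)*(b1+b2) \<le> 4*c" "0 \<le> t" "t \<le> 1"
  shows "(t*a1+(1-t)*a2)*(t*b1+(1-t)*b2) \<le> 9/8*c"
proof -
  have id: "(t*a1+(1-t)*a2)*(t*b1+(1-t)*b2) = a2*b2*((2*t-1)*(t-1)) + ((a1+a2)*(b1+b2)/4)*(4*t*(1-t)) + a1*b1*(t*(2*t-1))"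
  proof -
    have "((a1+a2)*(b1+b2)/4)*(4*t*(1-t)) = (a1+a2)*(b1+b2)*(t*(1-t))" by simp
    then show ?thesis by (simp add: algebra_simps)
  qed
  show ?thesis
  proof (cases "t \<le> 1/2")
    case True
    have h1: "(2*t-1)*(t-1) \<ge> 0" using True assms by (intro mult_nonpos_nonpos) auto
    have h2: "4*t*(1-t) \<ge> 0" using assms by auto
    have h3: "t*(2*t-1) \<le> 0" using True assms by (intro mult_nonneg_nonpos) auto
    have "a2*b2*((2*t-1)*(t-1)) \<le> c*((2*t-1)*(t-1))" using h1 assms by (intro mult_right_mono) auto
    moreover have "((a1+a2)*(b1+b2)/4)*(4*t*(1-t)) \<le> c*(4*t*(1-t))" using h2 assms by (intro mult_right_mono) auto
    moreover have "a1*b1*(t*(2*t-1)) \<le> 0" using h3 assms by (simp add: mult_nonneg_nonpos)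
    moreover have "c*((2*t-1)*(t-1)) + c*(4*t*(1-t)) \<le> 9/8*c"
    proof -
      have "c \<ge> 0" using assms by (smt (verit) mult_nonneg_nonneg)
      moreover have e: "(2*t-1)*(t-1) + 4*t*(1-t) = 9/8 - 2*(t-1/4)^2" by (simp add: algebra_simps power2_eq_square)
      have "(2*t-1)*(t-1) + 4*t*(1-t) \<le> 9/8" using e zero_le_power2[of "t-1/4"] by linarith
      ultimately show ?thesis by (metis distrib_left mult.commute mult_left_mono mult_1 ) 
    qed
    ultimately show ?thesis unfolding id by linarith
  next
    case False
    have h1: "(2*t-1)*(t-1) \<le> 0" using False assms by (intro mult_nonneg_nonpos) auto
    have h2: "4*t*(1-t) \<ge> 0" using assms by auto
    have h3: "t*(2*t-1) \<ge> 0" using False assms by auto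
    have "a1*b1*(t*(2*t-1)) \<le> c*(t*(2*t-1))" using h3 assms by (intro mult_right_mono) auto
    moreover have "((a1+a2)*(b1+b2)/4)*(4*t*(1-t)) \<le> c*(4*t*(1-t))" using h2 assms by (intro mult_right_mono) auto
    moreover have "a2*b2*((2*t-1)*(t-1)) \<le> 0" using h1 assms by (simp add: mult_nonneg_nonpos)
    moreover have "c*(t*(2*t-1)) + c*(4*t*(1-t)) \<le> 9/8*c"
    proof -
      have "c \<ge> 0" using assms by (smt (verit) mult_nonneg_nonneg)
      moreover have e: "t*(2*t-1) + 4*t*(1-t) = 9/8 - 2*(t-3/4)^2" by (simp add: algebra_simps power2_eq_square)
      have "t*(2*t-1) + 4*t*(1-t) \<le> 9/8" using e zero_le_power2[of "t-3/4"] by linarith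
      ultimately show ?thesis by (metis distrib_left mult.commute mult_left_mono mult_1 ) 
    qed
    ultimately show ?thesis unfolding id by linarith
  qed
qed

lemma cs_ineq:
  fixes f1 f2 F1 F2 q1 q2 s t :: real
  assumes "f1^2 \<le> F1 * q1" "f2^2 \<le> F2 * q2" "q1 > 0" "q2 > 0" "s \<ge> 0" "t \<ge> 0"
  shows "(s*f1+t*f2)^2 \<le> (s*F1+t*F2)*(s*q1+t*q2)"
proof -
  have a: "F1 * q2*(q1 * q2) \<ge> f1^2 * q2^2" using assms(1) assms(4) 
    by (simp add: mult_right_mono power2_eq_square mult.assoc mult.left_commute)
  have b: "F2 * q1*(q1 * q2) \<ge> f2^2 * q1^2" using assms(2) assms(3)
    by (simp add: mult_right_mono power2_eq_square mult.assoc mult.left_commute mult.commute)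
  have "(F1 * q2 + F2 * q1)*(q1 * q2) \<ge> 2*f1*f2*(q1 * q2)"
  proof -
    have e: "f1^2 * q2^2 + f2^2 * q1^2 - 2*f1*f2*(q1 * q2) = (f1 * q2 - f2 * q1)^2" by (simp add: algebra_simps power2_eq_square)
    have d: "(F1 * q2 + F2 * q1)*(q1 * q2) = F1 * q2*(q1 * q2) + F2 * q1*(q1 * q2)" by (simp add: algebra_simps)
    show ?thesis using a b e d zero_le_power2[of "f1 * q2 - f2 * q1"] by linarith
  qed
  hence c: "F1 * q2 + F2 * q1 \<ge> 2*f1*f2" using assms by (simp add: mult_le_cancel_right)
  have "(s*F1+t*F2)*(s*q1+t*q2) = s^2*(F1 * q1) + t^2*(F2 * q2) + s*t*(F1 * q2+F2 * q1)"
    by (simp add: algebra_simps power2_eq_square)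
  also have "\<dots> \<ge> s^2*f1^2 + t^2*f2^2 + s*t*(2*f1*f2)"
    using assms c by (intro add_mono mult_left_mono) (auto simp: mult_left_mono)
  finally show ?thesis by (simp add: algebra_simps power2_eq_square)
qed

lemma uv_ineq:
  fixes u1 u2 q1 q2 s t :: real
  assumes "1 \<le> u1 * q1" "1 \<le> u2 * q2" "u1 > 0" "u2 > 0" "q1 > 0" "q2 > 0" "s \<ge> 0" "t \<ge> 0" "s + t = 1"
  shows "1 \<le> (s*u1+t*u2)*(s*q1+t*q2)"
proof -
  have p: "(u1 * q2)*(u2 * q1) \<ge> 1" using assms
  proof -
    have "(u1 * q2)*(u2 * q1) = (u1 * q1)*(u2 * q2)" by (simp add: algebra_simps)
    also have "\<dots> \<ge> 1*1" using assms by (intro mult_mono) auto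
    finally show ?thesis by simp
  qed
  have pos: "u1 * q2 > 0" "u2 * q1 > 0" using assms by auto
  have c: "u1 * q2 + u2 * q1 \<ge> 2"
  proof -
    have e: "(u1 * q2 + u2 * q1)^2 = (u1 * q2 - u2 * q1)^2 + 4*((u1 * q2)*(u2 * q1))" by (simp add: algebra_simps power2_eq_square)
    have "4 \<le> (u1 * q2 + u2 * q1)^2" using e p zero_le_power2[of "u1 * q2 - u2 * q1"] by linarith
    then have "(2::real)^2 \<le> (u1 * q2 + u2 * q1)^2" by simp
    then show ?thesis by (rule power2_le_imp_le) (use pos in auto)
  qed
  have "(s*u1+t*u2)*(s*q1+t*q2) = s^2*(u1 * q1) + t^2*(u2 * q2) + s*t*(u1 * q2+u2 * q1)"
    by (simp add: algebra_simps power2_eq_square)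
  also have "\<dots> \<ge> s^2*1 + t^2*1 + s*t*2"
    using assms c by (intro add_mono mult_left_mono) auto
  also have "s^2*1 + t^2*1 + s*t*2 = (s+t)^2" by (simp add: algebra_simps power2_eq_square)
  finally show ?thesis using assms by simp
qed


definition Cset :: "pt set" where
  "Cset = {p. 0 < cu p \<and> 0 < cv p \<and> 1 \<le> cu p * cv p \<and> (cf p)^2 \<le> cF p * cv p \<and> (cg p)^2 \<le> cG p * cu p}"

lemma inE_iff: "inE a X K \<longleftrightarrow> X \<in> Cset \<and> cu X * cv X \<le> a \<and> 0 \<le> K \<and> K \<le> 1"
  unfolding inE_def Cset_def by auto

lemma convex_Cset: "convex Cset"
proof (rule convexI)
  fix x y :: pt and s t :: real
  assume x: "x \<in> Cset" and y: "y \<in> Cset" and st: "0 \<le> s" "0 \<le> t" "s + t = 1"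
  let ?z = "s *\<^sub>R x + t *\<^sub>R y"
  have u: "cu ?z = s * cu x + t * cu y" and v: "cv ?z = s * cv x + t * cv y"
   and f: "cf ?z = s * cf x + t * cf y" and g: "cg ?z = s * cg x + t * cg y"
   and F: "cF ?z = s * cF x + t * cF y" and G: "cG ?z = s * cG x + t * cG y"
    by (simp_all add: coord_lin)
  have xs: "0 < cu x" "0 < cv x" "1 \<le> cu x * cv x" "(cf x)^2 \<le> cF x * cv x" "(cg x)^2 \<le> cG x * cu x"
    using x unfolding Cset_def by auto
  have ys: "0 < cu y" "0 < cv y" "1 \<le> cu y * cv y" "(cf y)^2 \<le> cF y * cv y" "(cg y)^2 \<le> cG y * cu y"
    using y unfolding Cset_def by auto
  have "0 < s * cu x + t * cu y"
  proof (cases "s = 0")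
    case True then show ?thesis using st xs ys by simp
  next
    case False then have "s > 0" using st by simp
    then show ?thesis using st xs ys by (simp add: add_pos_nonneg)
  qed
  moreover have "0 < s * cv x + t * cv y"
  proof (cases "s = 0")
    case True then show ?thesis using st xs ys by simp
  next
    case False then have "s > 0" using st by simp
    then show ?thesis using st xs ys by (simp add: add_pos_nonneg)
  qed
  moreover have "1 \<le> (s * cu x + t * cu y) * (s * cv x + t * cv y)"
    using uv_ineq[of "cu x" "cv x" "cu y" "cv y" s t] xs ys st by simp
  moreover have "(s * cf x + t * cf y)^2 \<le> (s * cF x + t * cF y) * (s * cv x + t * cv y)"
    using cs_ineq[of "cf x" "cF x" "cv x" "cf y" "cF y" "cv y" s t] xs ys st by simp
  moreover have "(s * cg x + t * cg y)^2 \<le> (s * cG x + t * cG y) * (s * cu x + t * cu y)"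
    using cs_ineq[of "cg x" "cG x" "cu x" "cg y" "cG y" "cu y" s t] xs ys st by simp
  ultimately show "?z \<in> Cset" unfolding Cset_def using u v f g F G by simp
qed

lemma midpt_jensen:
  fixes \<phi> :: "real \<Rightarrow> real"
  assumes mid: "\<And>x y. 0 \<le> x \<Longrightarrow> x \<le> 1 \<Longrightarrow> 0 \<le> y \<Longrightarrow> y \<le> 1 \<Longrightarrow> (\<phi> x + \<phi> y)/2 \<le> \<phi> ((x+y)/2)"
    and nonneg: "\<And>x. 0 \<le> x \<Longrightarrow> x \<le> 1 \<Longrightarrow> 0 \<le> \<phi> x"
    and t: "0 \<le> t" "t \<le> 1"
  shows "t * \<phi> 1 + (1-t) * \<phi> 0 \<le> \<phi> t"
proof (rule ccontr)
  define \<psi> where "\<psi> x = \<phi> x - (x * \<phi> 1 + (1-x) * \<phi> 0)" for x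
  assume "\<not> ?thesis"
  then have neg: "\<psi> t < 0" unfolding \<psi>_def by simp
  define L where "L = \<phi> 0 + \<phi> 1"
  have L0: "0 \<le> \<phi> 0" "0 \<le> \<phi> 1" using nonneg by auto
  have lb: "- L \<le> \<psi> x" if "0 \<le> x" "x \<le> 1" for x
  proof -
    have "x * \<phi> 1 \<le> \<phi> 1" using that L0 by (simp add: mult_left_le_one_le)
    moreover have "(1-x) * \<phi> 0 \<le> \<phi> 0" using that L0 by (simp add: mult_left_le_one_le)
    ultimately show ?thesis using nonneg[OF that] unfolding \<psi>_def L_def by linarith
  qed
  have midpsi: "(\<psi> x + \<psi> y)/2 \<le> \<psi> ((x+y)/2)" if "0 \<le> x" "x \<le> 1" "0 \<le> y" "y \<le> 1" for x y
  proof -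
    have "(\<psi> x + \<psi> y)/2 = (\<phi> x + \<phi> y)/2 - ((x+y)/2 * \<phi> 1 + (1-(x+y)/2) * \<phi> 0)"
      unfolding \<psi>_def by (simp add: algebra_simps add_divide_distrib diff_divide_distrib)
    then show ?thesis using mid[OF that] unfolding \<psi>_def by linarith
  qed
  have psi0: "\<psi> 0 = 0" and psi1: "\<psi> 1 = 0" unfolding \<psi>_def by simp_all
  have step: "\<exists>x'. 0 \<le> x' \<and> x' \<le> 1 \<and> \<psi> x' \<le> 2 * \<psi> x" if "0 \<le> x" "x \<le> 1" for x
  proof (cases "x \<le> 1/2")
    case True
    have "(\<psi> 0 + \<psi> (2*x))/2 \<le> \<psi> ((0 + 2*x)/2)" using that True by (intro midpsi) auto
    then have "\<psi> (2*x) \<le> 2 * \<psi> x" using psi0 by simp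
    then show ?thesis using that True by (intro exI[of _ "2*x"]) auto
  next
    case False
    have "(\<psi> 1 + \<psi> (2*x-1))/2 \<le> \<psi> ((1 + (2*x-1))/2)" using that False by (intro midpsi) auto
    then have "\<psi> (2*x-1) \<le> 2 * \<psi> x" using psi1 by simp
    then show ?thesis using that False by (intro exI[of _ "2*x-1"]) auto
  qed
  have iter: "\<exists>x. 0 \<le> x \<and> x \<le> 1 \<and> \<psi> x \<le> 2^k * \<psi> t" for k :: nat
  proof (induction k)
    case 0 then show ?case using t by (intro exI[of _ t]) auto
  next
    case (Suc k)
    then obtain x where x: "0 \<le> x" "x \<le> 1" "\<psi> x \<le> 2^k * \<psi> t" by blast
    obtain x' where "0 \<le> x'" "x' \<le> 1" "\<psi> x' \<le> 2 * \<psi> x" using step[OF x(1,2)] by blast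
    then show ?case using x(3) by (intro exI[of _ x']) auto
  qed
  obtain k :: nat where k: "L / (- \<psi> t) < real k" using reals_Archimedean2 by blast
  have "real k \<le> 2^k" using of_nat_less_two_power[of k, where 'a=real] by simp
  then have "L < real k * (- \<psi> t)" using k neg pos_divide_less_eq[of "- \<psi> t" L "real k"] by simp
  also have "\<dots> \<le> 2^k * (- \<psi> t)" using \<open>real k \<le> 2^k\<close> neg by (intro mult_right_mono) auto
  finally have A: "2^k * \<psi> t < - L" by simp
  obtain x where "0 \<le> x" "x \<le> 1" "\<psi> x \<le> 2^k * \<psi> t" using iter by blast
  then show False using lb A by fastforce
qed



lemma seg_jensen:
  fixes Bf :: "pt \<Rightarrow> real \<Rightarrow> real" and ok :: "pt \<Rightarrow> real \<Rightarrow> bool"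
  assumes conc: "\<And>Y K Y1 K1 Y2 K2. ok Y K \<Longrightarrow> ok Y1 K1 \<Longrightarrow> ok Y2 K2 \<Longrightarrow>
      Y = (1/2) *\<^sub>R (Y1 + Y2) \<Longrightarrow> K = (K1+K2)/2 \<Longrightarrow> (Bf Y1 K1 + Bf Y2 K2)/2 \<le> Bf Y K"
    and nn: "\<And>Y K. ok Y K \<Longrightarrow> 0 \<le> Bf Y K"
    and seg: "\<And>x. 0 \<le> x \<Longrightarrow> x \<le> 1 \<Longrightarrow> ok (x *\<^sub>R P1 + (1-x) *\<^sub>R P2) (x*K1 + (1-x)*K2)"
    and t: "0 \<le> t" "t \<le> 1"
  shows "t * Bf P1 K1 + (1-t) * Bf P2 K2 \<le> Bf (t *\<^sub>R P1 + (1-t) *\<^sub>R P2) (t*K1 + (1-t)*K2)"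
proof -
  define \<phi> where "\<phi> x = Bf (x *\<^sub>R P1 + (1-x) *\<^sub>R P2) (x*K1 + (1-x)*K2)" for x
  have "t * \<phi> 1 + (1-t) * \<phi> 0 \<le> \<phi> t"
  proof (rule midpt_jensen[OF _ _ t])
    fix x y :: real assume xy: "0 \<le> x" "x \<le> 1" "0 \<le> y" "y \<le> 1"
    have e1: "((x+y)/2) *\<^sub>R P1 + (1-(x+y)/2) *\<^sub>R P2 = (1/2) *\<^sub>R ((x *\<^sub>R P1 + (1-x) *\<^sub>R P2) + (y *\<^sub>R P1 + (1-y) *\<^sub>R P2))"
      by (simp add: scaleR_add_right scaleR_diff_left add_divide_distrib diff_divide_distrib scaleR_add_left algebra_simps) (simp add: scaleR_add_left[symmetric])
    have e2: "(x+y)/2*K1 + (1-(x+y)/2)*K2 = ((x*K1 + (1-x)*K2) + (y*K1 + (1-y)*K2))/2"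
      by (simp add: algebra_simps add_divide_distrib diff_divide_distrib)
    have "(x+y)/2 \<ge> 0" "(x+y)/2 \<le> 1" using xy by auto
    then show "(\<phi> x + \<phi> y)/2 \<le> \<phi> ((x+y)/2)"
      unfolding \<phi>_def by (intro conc seg xy e1 e2)
  next
    fix x :: real assume "0 \<le> x" "x \<le> 1"
    then show "0 \<le> \<phi> x" unfolding \<phi>_def by (intro nn seg)
  qed
  then show ?thesis unfolding \<phi>_def by simp
qed

definition blk :: "nat \<Rightarrow> nat \<Rightarrow> nat set" where "blk h j = {j*2^h ..< (j+1)*2^h}"
definition wt :: "(nat \<Rightarrow> real) \<Rightarrow> nat \<Rightarrow> nat \<Rightarrow> real" where "wt D h j = (\<Sum>i\<in>blk h j. D i)"
definition wpt :: "(nat \<Rightarrow> real) \<Rightarrow> (nat \<Rightarrow> pt) \<Rightarrow> nat \<Rightarrow> nat \<Rightarrow> pt" where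
  "wpt D Y h j = (1 / wt D h j) *\<^sub>R (\<Sum>i\<in>blk h j. D i *\<^sub>R Y i)"
definition wm :: "(nat \<Rightarrow> real) \<Rightarrow> (nat \<Rightarrow> real) \<Rightarrow> nat \<Rightarrow> nat \<Rightarrow> real" where
  "wm D m h j = (\<Sum>i\<in>blk h j. D i * m i) / wt D h j"

lemma blk_sum: "sum f (blk (Suc h) j) = sum f (blk h (2*j)) + sum f (blk h (2*j+1))"
proof -
  have a1: "j*2^(Suc h) = (2*j)*2^h" by simp
  have a3: "(j+1)*2^(Suc h) = (2*j+1+1)*2^h" by simp
  have le1: "(2*j)*2^h \<le> (2*j+1)*2^h" by simp
  have le2: "(2*j+1)*2^h \<le> (2*j+1+1)*2^h" by simp
  show ?thesis unfolding blk_def a1 a3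
    using sum.atLeastLessThan_concat[OF le1 le2, of f] by simp
qed

lemma blk_sub: "j < 2^(n-h) \<Longrightarrow> h \<le> n \<Longrightarrow> blk h j \<subseteq> {..<2^n}"
proof -
  assume "j < 2^(n-h)" "h \<le> n"
  then have "(j+1) * 2^h \<le> 2^(n-h) * 2^h" by (intro mult_right_mono) auto
  also have "\<dots> = 2^n" using \<open>h \<le> n\<close> by (simp add: power_add[symmetric])
  finally show ?thesis unfolding blk_def by auto
qed

lemma card_blk: "card (blk h j) = 2^h" unfolding blk_def by (simp add: algebra_simps)


lemma node_props:
  fixes D :: "nat \<Rightarrow> real" and Y :: "nat \<Rightarrow> pt" and Z :: "nat \<Rightarrow> nat \<Rightarrow> pt" and ml :: "nat \<Rightarrow> real"
  assumes avg0: "\<forall>h j. h \<le> n \<longrightarrow> j < 2^(n-h) \<longrightarrow> (2^h) *\<^sub>R Z h j = (\<Sum>i\<in>blk h j. Y i)"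
    and Yin0: "\<forall>i. i < 2^n \<longrightarrow> Y i \<in> Cset"
    and ml0: "\<forall>i. i < 2^n \<longrightarrow> 0 \<le> ml i \<and> ml i \<le> 1"
    and D00: "\<forall>i. i < 2^n \<longrightarrow> 2/3 \<le> D i \<and> D i \<le> 4/3"
    and hj: "h \<le> n" "j < 2^(n-h)"
  shows "2/3 * 2^h \<le> wt D h j" "wpt D Y h j \<in> Cset" "cu (wpt D Y h j) \<le> 2 * cu (Z h j)"
    "cv (wpt D Y h j) \<le> 2 * cv (Z h j)" "0 \<le> wm D ml h j" "wm D ml h j \<le> 1"
proof -
  have avg: "\<And>h j. h \<le> n \<Longrightarrow> j < 2^(n-h) \<Longrightarrow> (2^h) *\<^sub>R Z h j = (\<Sum>i\<in>blk h j. Y i)" using avg0 by blast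
  have Yin: "\<And>i. i < 2^n \<Longrightarrow> Y i \<in> Cset" using Yin0 by blast
  have ml: "\<And>i. i < 2^n \<Longrightarrow> 0 \<le> ml i \<and> ml i \<le> 1" using ml0 by blast
  have D: "\<And>i. i < 2^n \<Longrightarrow> 2/3 \<le> D i \<and> D i \<le> 4/3" using D00 by blast
  have sub: "\<And>i. i \<in> blk h j \<Longrightarrow> i < 2^n" using blk_sub[OF hj(2,1)] by auto
  have fin: "finite (blk h j)" unfolding blk_def by simp
  have "(\<Sum>i\<in>blk h j. 2/3) \<le> wt D h j" unfolding wt_def using D sub by (intro sum_mono) auto
  then show W: "2/3 * 2^h \<le> wt D h j" by (simp add: card_blk)
  have "0 < (2::real)/3 * 2^h" by simp
  then have Wpos: "0 < wt D h j" using W by linarith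
  have e: "wpt D Y h j = (\<Sum>i\<in>blk h j. (D i / wt D h j) *\<^sub>R Y i)"
    unfolding wpt_def scaleR_sum_right by (simp add: scaleR_scaleR)
  have "(\<Sum>i\<in>blk h j. D i / wt D h j) = 1" using Wpos unfolding sum_divide_distrib[symmetric] wt_def by simp
  then show "wpt D Y h j \<in> Cset" unfolding e
    using convex_sum[OF fin convex_Cset, of "\<lambda>i. D i / wt D h j" Y] D sub Yin Wpos by force
  have Zu: "2^h * cu (Z h j) = (\<Sum>i\<in>blk h j. cu (Y i))"
    using arg_cong[OF avg[OF hj], of cu] by (simp add: coord_lin coord_sum)
  have Zv: "2^h * cv (Z h j) = (\<Sum>i\<in>blk h j. cv (Y i))"
    using arg_cong[OF avg[OF hj], of cv] by (simp add: coord_lin coord_sum)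
  have D0: "0 \<le> D i" if "i \<in> blk h j" for i
  proof - have "2/3 \<le> D i" using D sub that by blast then show ?thesis by linarith qed
  have ml0: "0 \<le> ml i \<and> ml i \<le> 1" if "i \<in> blk h j" for i using ml sub that by blast
  have upos: "\<And>i. i \<in> blk h j \<Longrightarrow> 0 < cu (Y i) \<and> 0 < cv (Y i)" using Yin sub unfolding Cset_def by auto
  have cuw: "cu (wpt D Y h j) = (\<Sum>i\<in>blk h j. D i * cu (Y i)) / wt D h j"
    unfolding wpt_def by (simp add: coord_lin coord_sum)
  have cvw: "cv (wpt D Y h j) = (\<Sum>i\<in>blk h j. D i * cv (Y i)) / wt D h j"
    unfolding wpt_def by (simp add: coord_lin coord_sum)
  have Su: "(\<Sum>i\<in>blk h j. D i * cu (Y i)) \<le> 4/3 * (2^h * cu (Z h j))"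
    unfolding Zu sum_distrib_left using D sub upos by (intro sum_mono mult_right_mono) (auto intro: less_imp_le)
  have Sv: "(\<Sum>i\<in>blk h j. D i * cv (Y i)) \<le> 4/3 * (2^h * cv (Z h j))"
    unfolding Zv sum_distrib_left using D sub upos by (intro sum_mono mult_right_mono) (auto intro: less_imp_le)
  have Su0: "0 \<le> (\<Sum>i\<in>blk h j. D i * cu (Y i))" using D0 upos by (intro sum_nonneg mult_nonneg_nonneg) (auto intro: less_imp_le)
  have Sv0: "0 \<le> (\<Sum>i\<in>blk h j. D i * cv (Y i))" using D0 upos by (intro sum_nonneg mult_nonneg_nonneg) (auto intro: less_imp_le)
  have "0 \<le> 2^h * cu (Z h j)" using Su0 Su by linarith
  moreover have "(0::real) < 2^h" by simp
  ultimately have Zu0: "0 \<le> cu (Z h j)" by (simp add: zero_le_mult_iff)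
  have "0 \<le> 2^h * cv (Z h j)" using Sv0 Sv by linarith
  moreover have "(0::real) < 2^h" by simp
  ultimately have Zv0: "0 \<le> cv (Z h j)" by (simp add: zero_le_mult_iff)
  have "cu (wpt D Y h j) \<le> (4/3 * (2^h * cu (Z h j))) / (2/3 * 2^h)"
    unfolding cuw using Su Su0 W Zu0 by (intro frac_le) auto
  also have "\<dots> = 2 * cu (Z h j)" by simp
  finally show "cu (wpt D Y h j) \<le> 2 * cu (Z h j)" .
  have "cv (wpt D Y h j) \<le> (4/3 * (2^h * cv (Z h j))) / (2/3 * 2^h)"
    unfolding cvw using Sv Sv0 W Zv0 by (intro frac_le) auto
  also have "\<dots> = 2 * cv (Z h j)" by simp
  finally show "cv (wpt D Y h j) \<le> 2 * cv (Z h j)" .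
  have "0 \<le> (\<Sum>i\<in>blk h j. D i * ml i)" using D0 ml0 by (intro sum_nonneg mult_nonneg_nonneg) auto
  then show "0 \<le> wm D ml h j" unfolding wm_def using Wpos by simp
  have "(\<Sum>i\<in>blk h j. D i * ml i) \<le> wt D h j" unfolding wt_def
    using D0 ml0 by (intro sum_mono mult_left_le) auto
  then show "wm D ml h j \<le> 1" unfolding wm_def using Wpos by simp
qed



lemma tree_ineq:
  fixes D :: "nat \<Rightarrow> real" and Y :: "nat \<Rightarrow> pt" and Z :: "nat \<Rightarrow> nat \<Rightarrow> pt" and ml :: "nat \<Rightarrow> real"
    and Bf :: "pt \<Rightarrow> real \<Rightarrow> real"
  assumes conc: "\<And>Y K Y1 K1 Y2 K2. inE a Y K \<Longrightarrow> inE a Y1 K1 \<Longrightarrow> inE a Y2 K2 \<Longrightarrow>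
      Y = (1/2) *\<^sub>R (Y1 + Y2) \<Longrightarrow> K = (K1+K2)/2 \<Longrightarrow> (Bf Y1 K1 + Bf Y2 K2)/2 \<le> Bf Y K"
    and nn: "\<And>Y K. inE a Y K \<Longrightarrow> 0 \<le> Bf Y K"
    and a: "a = 9/2 * A"
    and avg: "\<And>h j. h \<le> n \<Longrightarrow> j < 2^(n-h) \<Longrightarrow> (2^h) *\<^sub>R Z h j = (\<Sum>i\<in>blk h j. Y i)"
    and Zin: "\<And>h j. h \<le> n \<Longrightarrow> j < 2^(n-h) \<Longrightarrow> cu (Z h j) * cv (Z h j) \<le> A"
    and Yin: "\<And>i. i < 2^n \<Longrightarrow> Y i \<in> Cset"
    and ml: "\<And>i. i < 2^n \<Longrightarrow> 0 \<le> ml i \<and> ml i \<le> 1"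
    and D: "\<And>i. i < 2^n \<Longrightarrow> 2/3 \<le> D i \<and> D i \<le> 4/3"
  shows "h \<le> n \<Longrightarrow> j < 2^(n-h) \<Longrightarrow>
    (\<Sum>i\<in>blk h j. D i * Bf (Y i) (ml i)) \<le> wt D h j * Bf (wpt D Y h j) (wm D ml h j)"
proof (induction h arbitrary: j)
  case 0
  have b: "blk 0 j = {j}" unfolding blk_def by auto
  have "j < 2^n" using 0 by simp
  then have "D j \<noteq> 0" using D[of j] by auto
  then show ?case unfolding wt_def wpt_def wm_def b by simp
next
  case (Suc h)
  have q1: "\<forall>h j. h \<le> n \<longrightarrow> j < 2^(n-h) \<longrightarrow> (2^h) *\<^sub>R Z h j = (\<Sum>i\<in>blk h j. Y i)" using avg by blast
  have q2: "\<forall>i. i < 2^n \<longrightarrow> Y i \<in> Cset" using Yin by blast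
  have q3: "\<forall>i. i < 2^n \<longrightarrow> 0 \<le> ml i \<and> ml i \<le> 1" using ml by blast
  have q4: "\<forall>i. i < 2^n \<longrightarrow> 2/3 \<le> D i \<and> D i \<le> 4/3" using D by blast
  note NP = node_props[OF q1 q2 q3 q4]
  have hn: "h \<le> n" using Suc by simp
  have pw: "(2::nat)^(n-h) = 2 * 2^(n - Suc h)" using Suc.prems(1)
    by (metis Suc_diff_le diff_Suc_Suc power_Suc)
  have c1: "2*j < 2^(n-h)" and c2: "2*j+1 < 2^(n-h)" using Suc.prems(2) unfolding pw by auto
  define W1 where "W1 = wt D h (2*j)"
  define W2 where "W2 = wt D h (2*j+1)"
  define W where "W = wt D (Suc h) j"
  define P1 where "P1 = wpt D Y h (2*j)"
  define P2 where "P2 = wpt D Y h (2*j+1)"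
  define K1 where "K1 = wm D ml h (2*j)"
  define K2 where "K2 = wm D ml h (2*j+1)"
  have WW: "W = W1 + W2" unfolding W_def W1_def W2_def wt_def by (rule blk_sum)
  have W1p: "0 < W1" using NP(1)[OF hn c1] unfolding W1_def
    by (smt (verit, best) zero_less_power mult_pos_pos zero_less_divide_iff)
  have W2p: "0 < W2" using NP(1)[OF hn c2] unfolding W2_def
    by (smt (verit, best) zero_less_power mult_pos_pos zero_less_divide_iff)
  define t where "t = W1 / W"
  have t01: "0 \<le> t" "t \<le> 1" unfolding t_def WW using W1p W2p by auto
  have t1: "1 - t = W2 / W" unfolding t_def WW using W1p W2p by (simp add: field_simps)
  have Pe: "wpt D Y (Suc h) j = t *\<^sub>R P1 + (1-t) *\<^sub>R P2"
  proof -
    have "wpt D Y (Suc h) j = (1/W) *\<^sub>R (\<Sum>i\<in>blk h (2*j). D i *\<^sub>R Y i) + (1/W) *\<^sub>R (\<Sum>i\<in>blk h (2*j+1). D i *\<^sub>R Y i)"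
      unfolding wpt_def W_def blk_sum[of _ h j] by (simp add: scaleR_add_right)
    moreover have "t *\<^sub>R P1 = (1/W) *\<^sub>R (\<Sum>i\<in>blk h (2*j). D i *\<^sub>R Y i)"
      unfolding P1_def wpt_def t_def W1_def[symmetric] using W1p by simp
    moreover have "(1-t) *\<^sub>R P2 = (1/W) *\<^sub>R (\<Sum>i\<in>blk h (2*j+1). D i *\<^sub>R Y i)"
      unfolding P2_def wpt_def t1 W2_def[symmetric] using W2p by simp
    ultimately show ?thesis by simp
  qed
  have Ke: "wm D ml (Suc h) j = t * K1 + (1-t) * K2"
  proof -
    have "wm D ml (Suc h) j = (\<Sum>i\<in>blk h (2*j). D i * ml i)/W + (\<Sum>i\<in>blk h (2*j+1). D i * ml i)/W"
      unfolding wm_def W_def blk_sum[of _ h j] by (simp add: add_divide_distrib)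
    moreover have "t * K1 = (\<Sum>i\<in>blk h (2*j). D i * ml i)/W"
      unfolding K1_def wm_def t_def W1_def[symmetric] using W1p by simp
    moreover have "(1-t) * K2 = (\<Sum>i\<in>blk h (2*j+1). D i * ml i)/W"
      unfolding K2_def wm_def t1 W2_def[symmetric] using W2p by simp
    ultimately show ?thesis by simp
  qed
  have Zsum: "cu (Z h (2*j)) + cu (Z h (2*j+1)) = 2 * cu (Z (Suc h) j)"
   and Zsumv: "cv (Z h (2*j)) + cv (Z h (2*j+1)) = 2 * cv (Z (Suc h) j)"
  proof -
    have V: "(2^Suc h) *\<^sub>R Z (Suc h) j = (2^h) *\<^sub>R Z h (2*j) + (2^h) *\<^sub>R Z h (2*j+1)"
      using avg[OF Suc.prems] avg[OF hn c1] avg[OF hn c2] blk_sum[of _ h j] by simp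
    have e0: "2^Suc h * cu (Z (Suc h) j) = 2^h * cu (Z h (2*j)) + 2^h * cu (Z h (2*j+1))"
      using arg_cong[OF V, of cu] by (simp add: coord_lin)
    have e0': "2^Suc h * cv (Z (Suc h) j) = 2^h * cv (Z h (2*j)) + 2^h * cv (Z h (2*j+1))"
      using arg_cong[OF V, of cv] by (simp add: coord_lin)
    have e: "2^h * (2 * cu (Z (Suc h) j)) = 2^h * (cu (Z h (2*j)) + cu (Z h (2*j+1)))"
      using e0 by (simp add: algebra_simps)
    have e': "2^h * (2 * cv (Z (Suc h) j)) = 2^h * (cv (Z h (2*j)) + cv (Z h (2*j+1)))"
      using e0' by (simp add: algebra_simps)
    show "cu (Z h (2*j)) + cu (Z h (2*j+1)) = 2 * cu (Z (Suc h) j)" using e by simp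
    show "cv (Z h (2*j)) + cv (Z h (2*j+1)) = 2 * cv (Z (Suc h) j)" using e' by simp
  qed
  have P1C: "P1 \<in> Cset" and P2C: "P2 \<in> Cset" unfolding P1_def P2_def using NP(2) hn c1 c2 by auto
  have b1: "cu P1 \<le> 2 * cu (Z h (2*j))" "cv P1 \<le> 2 * cv (Z h (2*j))"
    unfolding P1_def using NP(3,4)[OF hn c1] by auto
  have b2: "cu P2 \<le> 2 * cu (Z h (2*j+1))" "cv P2 \<le> 2 * cv (Z h (2*j+1))"
    unfolding P2_def using NP(3,4)[OF hn c2] by auto
  have pos: "0 < cu P1" "0 < cv P1" "0 < cu P2" "0 < cv P2" using P1C P2C unfolding Cset_def by auto
  have ab1: "cu P1 * cv P1 \<le> 4 * A"
  proof -
    have "cu P1 * cv P1 \<le> (2 * cu (Z h (2*j))) * (2 * cv (Z h (2*j)))"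
      using b1 pos by (intro mult_mono) auto
    then show ?thesis using Zin[OF hn c1] by linarith
  qed
  have ab2: "cu P2 * cv P2 \<le> 4 * A"
  proof -
    have "cu P2 * cv P2 \<le> (2 * cu (Z h (2*j+1))) * (2 * cv (Z h (2*j+1)))"
      using b2 pos by (intro mult_mono) auto
    then show ?thesis using Zin[OF hn c2] by linarith
  qed
  have ab3: "(cu P1 + cu P2) * (cv P1 + cv P2) \<le> 4 * (4 * A)"
  proof -
    have "(cu P1 + cu P2) * (cv P1 + cv P2) \<le> (4 * cu (Z (Suc h) j)) * (4 * cv (Z (Suc h) j))"
      using b1 b2 pos Zsum Zsumv by (intro mult_mono) auto
    then show ?thesis using Zin[OF Suc.prems] by linarith
  qed
  have seg: "inE a (x *\<^sub>R P1 + (1-x) *\<^sub>R P2) (x*K1 + (1-x)*K2)" if x: "0 \<le> x" "x \<le> 1" for x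
  proof -
    have C: "x *\<^sub>R P1 + (1-x) *\<^sub>R P2 \<in> Cset" using convexD[OF convex_Cset P1C P2C] x by simp
    have q: "(x * cu P1 + (1-x) * cu P2) * (x * cv P1 + (1-x) * cv P2) \<le> 9/8 * (4*A)"
      using quad9[OF _ _ _ _ ab1 ab2 ab3 x] pos by auto
    have k: "0 \<le> K1" "K1 \<le> 1" "0 \<le> K2" "K2 \<le> 1" unfolding K1_def K2_def using NP(5,6) hn c1 c2 by auto
    have "0 \<le> x*K1 + (1-x)*K2" using k x by simp
    moreover have "x*K1 + (1-x)*K2 \<le> 1"
    proof -
      have "x*K1 \<le> x*1" "(1-x)*K2 \<le> (1-x)*1" using k x by (intro mult_left_mono; simp)+
      then show ?thesis by simp
    qed
    ultimately show ?thesis unfolding inE_iff a using C q by (simp add: coord_lin)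
  qed
  have J: "t * Bf P1 K1 + (1-t) * Bf P2 K2 \<le> Bf (t *\<^sub>R P1 + (1-t) *\<^sub>R P2) (t*K1 + (1-t)*K2)"
    apply (rule seg_jensen[where ok="inE a"])
        apply (rule conc; assumption)
       apply (rule nn; assumption)
      apply (rule seg; assumption)
     apply (rule t01(1))
    apply (rule t01(2))
    done
  have IH1: "(\<Sum>i\<in>blk h (2*j). D i * Bf (Y i) (ml i)) \<le> W1 * Bf P1 K1"
    unfolding W1_def P1_def K1_def using Suc.IH[OF hn c1] .
  have IH2: "(\<Sum>i\<in>blk h (2*j+1). D i * Bf (Y i) (ml i)) \<le> W2 * Bf P2 K2"
    unfolding W2_def P2_def K2_def using Suc.IH[OF hn c2] .
  have Wt: "W * t = W1" unfolding t_def using W1p W2p WW by simp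
  have Wt2: "W * (1-t) = W2" unfolding t1 using W1p W2p WW by simp
  have "W * (t * Bf P1 K1 + (1-t) * Bf P2 K2) = (W * t) * Bf P1 K1 + (W * (1-t)) * Bf P2 K2"
    by (simp add: algebra_simps)
  then have "W1 * Bf P1 K1 + W2 * Bf P2 K2 = W * (t * Bf P1 K1 + (1-t) * Bf P2 K2)"
    unfolding Wt Wt2 by simp
  also have "\<dots> \<le> W * Bf (t *\<^sub>R P1 + (1-t) *\<^sub>R P2) (t*K1 + (1-t)*K2)"
    using J W1p W2p WW by (intro mult_left_mono) auto
  finally show ?case unfolding blk_sum[of _ h j] W_def[symmetric] Pe Ke using IH1 IH2 by linarith
qed


theorem lemma8p3:
  fixes C A :: real and n :: nat
    and B :: "real \<Rightarrow> pt \<Rightarrow> real \<Rightarrow> real"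
    and X :: "nat \<Rightarrow> nat \<Rightarrow> pt" and M :: "nat \<Rightarrow> nat \<Rightarrow> real"
  assumes C_pos: "C > 0"
    and B_bound: "\<And>a Y K. a > 1 \<Longrightarrow> inE a Y K \<Longrightarrow>
        0 \<le> B a Y K \<and> B a Y K \<le> C * a * sqrt (cF Y) * sqrt (cG Y)"
    and B_conc: "\<And>a Y K Y1 K1 Y2 K2. a > 1 \<Longrightarrow> inE a Y K \<Longrightarrow> inE a Y1 K1 \<Longrightarrow> inE a Y2 K2 \<Longrightarrow>
        Y = (1/2) *\<^sub>R (Y1 + Y2) \<Longrightarrow> K - (K1 + K2) / 2 \<ge> 0 \<Longrightarrow>
        B a Y K - (B a Y1 K1 + B a Y2 K2) / 2 \<ge> (K - (K1 + K2) / 2) * \<bar>cf Y\<bar> * \<bar>cg Y1 - cg Y2\<bar>"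
    and A_gt: "A > 1"
    and n_ge: "n \<ge> 1"
    and XM_in: "\<And>k j. k \<le> n \<Longrightarrow> j < 2 ^ k \<Longrightarrow> inE A (X k j) (M k j)"
    and X_mid: "\<And>k j. k < n \<Longrightarrow> j < 2 ^ k \<Longrightarrow>
        X k j = (1/2) *\<^sub>R (X (Suc k) (2 * j) + X (Suc k) (2 * j + 1))"
    and M_mid: "\<And>k j. 0 < k \<Longrightarrow> k < n \<Longrightarrow> j < 2 ^ k \<Longrightarrow>
        M k j = (M (Suc k) (2 * j) + M (Suc k) (2 * j + 1)) / 2"
    and d_nonneg: "M 0 0 - (1 / 2 ^ n) * (\<Sum>j<2 ^ n. M n j) \<ge> 0"
  shows "(M 0 0 - (1 / 2 ^ n) * (\<Sum>j<2 ^ n. M n j)) * \<bar>cf (X 0 0)\<bar>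
            * ((1 / 2 ^ n) * (\<Sum>j<2 ^ n. \<bar>cg (X n j) - cg (X 0 0)\<bar>))
         \<le> 36 * (B (9/2 * A) (X 0 0) (M 0 0)
                  - (1 / 2 ^ n) * (\<Sum>j<2 ^ n. B (9/2 * A) (X n j) (M n j)))"

proof -
  define a where "a = 9/2 * A"
  define N :: real where "N = 2^n"
  have Npos: "N > 0" by (simp add: N_def)
  define Bf where "Bf = B a"
  have a1: "a > 1" using A_gt by (simp add: a_def)
  have conc: "\<And>Y K Y1 K1 Y2 K2. inE a Y K \<Longrightarrow> inE a Y1 K1 \<Longrightarrow> inE a Y2 K2 \<Longrightarrow>
      Y = (1/2) *\<^sub>R (Y1 + Y2) \<Longrightarrow> K = (K1+K2)/2 \<Longrightarrow> (Bf Y1 K1 + Bf Y2 K2)/2 \<le> Bf Y K"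
  proof -
    fix Y K Y1 K1 Y2 K2
    assume h: "inE a Y K" "inE a Y1 K1" "inE a Y2 K2" "Y = (1/2) *\<^sub>R (Y1 + Y2)" "K = (K1+K2)/2"
    have d0: "K - (K1+K2)/2 \<ge> 0" using h(5) by simp
    have "B a Y K - (B a Y1 K1 + B a Y2 K2)/2 \<ge> (K - (K1+K2)/2) * \<bar>cf Y\<bar> * \<bar>cg Y1 - cg Y2\<bar>"
      by (rule B_conc[OF a1 h(1,2,3,4) d0])
    moreover have z: "K - (K1+K2)/2 = 0" using h(5) by simp
    ultimately have "B a Y K - (B a Y1 K1 + B a Y2 K2)/2 \<ge> 0" by (metis mult_zero_left)
    then show "(Bf Y1 K1 + Bf Y2 K2)/2 \<le> Bf Y K" unfolding Bf_def by linarith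
  qed
  have nn: "\<And>Y K. inE a Y K \<Longrightarrow> 0 \<le> Bf Y K" using B_bound a1 by (simp add: Bf_def)
  define Z where "Z h j = X (n-h) j" for h j
  define Y where "Y i = X n i" for i
  define ml where "ml i = M n i" for i
  have avg: "\<And>h j. h \<le> n \<Longrightarrow> j < 2^(n-h) \<Longrightarrow> (2^h) *\<^sub>R Z h j = (\<Sum>i\<in>blk h j. Y i)"
  proof -
    fix h j :: nat show "h \<le> n \<Longrightarrow> j < 2^(n-h) \<Longrightarrow> (2^h) *\<^sub>R Z h j = (\<Sum>i\<in>blk h j. Y i)"
    proof (induction h arbitrary: j)
      case 0 then show ?case by (simp add: Z_def Y_def blk_def)
    next
      case (Suc h)
      have hn: "h \<le> n" using Suc by simp
      have pw: "(2::nat)^(n-h) = 2 * 2^(n - Suc h)" using Suc.prems(1)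
        by (metis Suc_diff_le diff_Suc_Suc power_Suc)
      have c1: "2*j < 2^(n-h)" and c2: "2*j+1 < 2^(n-h)" using Suc.prems(2) unfolding pw by auto
      have k: "Suc (n - Suc h) = n - h" using Suc.prems(1) by simp
      have lt: "n - Suc h < n" using Suc.prems(1) by simp
      have "X (n - Suc h) j = (1/2) *\<^sub>R (X (Suc (n - Suc h)) (2*j) + X (Suc (n - Suc h)) (2*j+1))"
        using X_mid[OF lt Suc.prems(2)] .
      then have "X (n - Suc h) j = (1/2) *\<^sub>R (X (n-h) (2*j) + X (n-h) (2*j+1))" unfolding k .
      then have "(2^Suc h) *\<^sub>R Z (Suc h) j = (2^h) *\<^sub>R Z h (2*j) + (2^h) *\<^sub>R Z h (2*j+1)"
        unfolding Z_def by (simp add: scaleR_add_right)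
      also have "\<dots> = (\<Sum>i\<in>blk h (2*j). Y i) + (\<Sum>i\<in>blk h (2*j+1). Y i)"
        using Suc.IH[OF hn c1] Suc.IH[OF hn c2] by simp
      finally show ?case by (simp add: blk_sum)
    qed
  qed
  have Zin: "\<And>h j. h \<le> n \<Longrightarrow> j < 2^(n-h) \<Longrightarrow> cu (Z h j) * cv (Z h j) \<le> A"
  proof -
    fix h j :: nat assume "h \<le> n" "j < 2^(n-h)"
    then have "inE A (X (n-h) j) (M (n-h) j)" by (intro XM_in) auto
    then show "cu (Z h j) * cv (Z h j) \<le> A" by (simp add: inE_def Z_def)
  qed
  have Yin: "\<And>i. i < 2^n \<Longrightarrow> Y i \<in> Cset" using XM_in[of n] by (simp add: Y_def inE_iff)
  have mlb: "\<And>i. i < 2^n \<Longrightarrow> 0 \<le> ml i \<and> ml i \<le> 1" using XM_in[of n] by (simp add: ml_def inE_iff)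
  have Bn0: "blk n 0 = {..<2^n}" by (auto simp: blk_def)
  define g0 where "g0 = cg (X 0 0)"
  define \<sigma> where "\<sigma> i = sgn (cg (Y i) - g0) / 6" for i
  define sb where "sb = (\<Sum>i\<in>blk n 0. \<sigma> i) / N"
  define hh where "hh i = \<sigma> i - sb" for i
  define Dp where "Dp i = 1 + hh i" for i
  define Dm where "Dm i = 1 - hh i" for i
  have \<sigma>b: "\<bar>\<sigma> i\<bar> \<le> 1/6" for i unfolding \<sigma>_def by (simp add: sgn_real_def)
  have cardB: "card (blk n 0) = 2^n" by (rule card_blk)
  have "\<bar>\<Sum>i\<in>blk n 0. \<sigma> i\<bar> \<le> (\<Sum>i\<in>blk n 0. \<bar>\<sigma> i\<bar>)" by (rule sum_abs)
  also have "\<dots> \<le> (\<Sum>i\<in>blk n 0. 1/6)" using \<sigma>b by (intro sum_mono) auto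
  also have "\<dots> = N / 6" using cardB by (simp add: N_def)
  finally have "\<bar>\<Sum>i\<in>blk n 0. \<sigma> i\<bar> \<le> N/6" .
  then have "\<bar>\<Sum>i\<in>blk n 0. \<sigma> i\<bar> / N \<le> (N/6) / N" using Npos by (intro divide_right_mono) auto
  moreover have "\<bar>sb\<bar> = \<bar>\<Sum>i\<in>blk n 0. \<sigma> i\<bar> / N" unfolding sb_def using Npos by (simp add: abs_divide)
  moreover have "(N/6) / N = 1/6" using Npos by simp
  ultimately have sbb: "\<bar>sb\<bar> \<le> 1/6" by linarith
  have hhb: "\<bar>hh i\<bar> \<le> 1/3" for i unfolding hh_def using \<sigma>b[of i] sbb abs_triangle_ineq4[of "\<sigma> i" sb] by linarith
  have Dpb: "2/3 \<le> Dp i \<and> Dp i \<le> 4/3" if "i < 2^n" for i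
    using hhb[of i] unfolding Dp_def abs_le_iff by linarith
  have Dmb: "2/3 \<le> Dm i \<and> Dm i \<le> 4/3" if "i < 2^n" for i
    using hhb[of i] unfolding Dm_def abs_le_iff by linarith
  have hh0: "(\<Sum>i\<in>blk n 0. hh i) = 0"
    unfolding hh_def sum_subtractf using cardB Npos by (simp add: sb_def N_def)
  have Wp: "wt Dp n 0 = N" unfolding wt_def Dp_def sum.distrib hh0 using cardB by (simp add: N_def)
  have Wm: "wt Dm n 0 = N" unfolding wt_def Dm_def sum_subtractf hh0 using cardB by (simp add: N_def)
  have TP: "(\<Sum>i\<in>blk n 0. Dp i * Bf (Y i) (ml i)) \<le> wt Dp n 0 * Bf (wpt Dp Y n 0) (wm Dp ml n 0)"
    apply (rule tree_ineq[where a=a and A=A and n=n and Z=Z and Y=Y and ml=ml and D=Dp and Bf=Bf and h=n and j=0])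
    apply (rule conc; assumption)
    apply (rule nn; assumption)
    apply (rule a_def)
    apply (rule avg; assumption)
    apply (rule Zin; assumption)
    apply (rule Yin; assumption)
    apply (rule mlb; assumption)
    apply (rule Dpb; assumption)
    apply simp
    apply simp
    done
  have TM: "(\<Sum>i\<in>blk n 0. Dm i * Bf (Y i) (ml i)) \<le> wt Dm n 0 * Bf (wpt Dm Y n 0) (wm Dm ml n 0)"
    apply (rule tree_ineq[where a=a and A=A and n=n and Z=Z and Y=Y and ml=ml and D=Dm and Bf=Bf and h=n and j=0])
    apply (rule conc; assumption)
    apply (rule nn; assumption)
    apply (rule a_def)
    apply (rule avg; assumption)
    apply (rule Zin; assumption)
    apply (rule Yin; assumption)
    apply (rule mlb; assumption)
    apply (rule Dmb; assumption)
    apply simp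
    apply simp
    done
  have q1: "\<forall>h j. h \<le> n \<longrightarrow> j < 2^(n-h) \<longrightarrow> (2^h) *\<^sub>R Z h j = (\<Sum>i\<in>blk h j. Y i)" using avg by blast
  have q2: "\<forall>i. i < 2^n \<longrightarrow> Y i \<in> Cset" using Yin by blast
  have q3: "\<forall>i. i < 2^n \<longrightarrow> 0 \<le> ml i \<and> ml i \<le> 1" using mlb by blast
  have q4p: "\<forall>i. i < 2^n \<longrightarrow> 2/3 \<le> Dp i \<and> Dp i \<le> 4/3" using Dpb by blast
  have q4m: "\<forall>i. i < 2^n \<longrightarrow> 2/3 \<le> Dm i \<and> Dm i \<le> 4/3" using Dmb by blast
  have nn0: "n \<le> n" "(0::nat) < 2^(n-n)" by simp_all
  note NPp = node_props[OF q1 q2 q3 q4p nn0]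
  note NPm = node_props[OF q1 q2 q3 q4m nn0]
  define Pp where "Pp = wpt Dp Y n 0"
  define Pm where "Pm = wpt Dm Y n 0"
  define Kp where "Kp = wm Dp ml n 0"
  define Km where "Km = wm Dm ml n 0"
  have Zn0: "Z n 0 = X 0 0" by (simp add: Z_def)
  have X0in: "inE A (X 0 0) (M 0 0)" using XM_in[of 0 0] by simp
  have X0uv: "cu (X 0 0) * cv (X 0 0) \<le> A" "0 < cu (X 0 0)" "0 < cv (X 0 0)" using X0in by (auto simp: inE_def)
  have inP: "inE a Pp Kp"
  proof -
    have "cu Pp * cv Pp \<le> (2 * cu (X 0 0)) * (2 * cv (X 0 0))"
      using NPp(3,4) NPp(2) X0uv unfolding Pp_def Zn0 Cset_def by (intro mult_mono) auto
    then have "cu Pp * cv Pp \<le> a" using X0uv A_gt unfolding a_def by linarith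
    then show ?thesis using NPp(2,5,6) unfolding inE_iff Pp_def Kp_def by simp
  qed
  have inM: "inE a Pm Km"
  proof -
    have "cu Pm * cv Pm \<le> (2 * cu (X 0 0)) * (2 * cv (X 0 0))"
      using NPm(3,4) NPm(2) X0uv unfolding Pm_def Zn0 Cset_def by (intro mult_mono) auto
    then have "cu Pm * cv Pm \<le> a" using X0uv A_gt unfolding a_def by linarith
    then show ?thesis using NPm(2,5,6) unfolding inE_iff Pm_def Km_def by simp
  qed
  have in0: "inE a (X 0 0) (M 0 0)" using X0in A_gt unfolding inE_def a_def by auto
  have sY: "(\<Sum>i\<in>blk n 0. Y i) = N *\<^sub>R X 0 0" using avg[of n 0] by (simp add: Z_def N_def)
  have PpPm: "Pp + Pm = (2/N) *\<^sub>R (\<Sum>i\<in>blk n 0. Y i)"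
  proof -
    have "Pp + Pm = (1/N) *\<^sub>R ((\<Sum>i\<in>blk n 0. Dp i *\<^sub>R Y i) + (\<Sum>i\<in>blk n 0. Dm i *\<^sub>R Y i))"
      unfolding Pp_def Pm_def wpt_def Wp Wm by (simp add: scaleR_add_right)
    also have "(\<Sum>i\<in>blk n 0. Dp i *\<^sub>R Y i) + (\<Sum>i\<in>blk n 0. Dm i *\<^sub>R Y i) = (\<Sum>i\<in>blk n 0. 2 *\<^sub>R Y i)"
      unfolding sum.distrib[symmetric] scaleR_add_left[symmetric] by (simp add: Dp_def Dm_def)
    finally show ?thesis by (simp add: scaleR_sum_right[symmetric])
  qed
  have X0mid: "X 0 0 = (1/2) *\<^sub>R (Pp + Pm)" unfolding PpPm sY using Npos by simp
  have KpKm: "Kp + Km = 2 * ((1 / 2^n) * (\<Sum>j<2^n. M n j))"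
  proof -
    have "Kp + Km = ((\<Sum>i\<in>blk n 0. Dp i * ml i) + (\<Sum>i\<in>blk n 0. Dm i * ml i)) / N"
      unfolding Kp_def Km_def wm_def Wp Wm by (simp add: add_divide_distrib)
    also have "(\<Sum>i\<in>blk n 0. Dp i * ml i) + (\<Sum>i\<in>blk n 0. Dm i * ml i) = (\<Sum>i\<in>blk n 0. 2 * ml i)"
      unfolding sum.distrib[symmetric] by (intro sum.cong) (auto simp: Dp_def Dm_def algebra_simps)
    finally show ?thesis unfolding Bn0 ml_def N_def by (simp add: sum_distrib_left sum_divide_distrib)
  qed
  define d where "d = M 0 0 - (1 / 2 ^ n) * (\<Sum>j<2^n. M n j)"
  have d0: "d \<ge> 0" using d_nonneg unfolding d_def .
  have dd: "M 0 0 - (Kp + Km)/2 = d" unfolding KpKm d_def by simp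
  have gain: "Bf (X 0 0) (M 0 0) - (Bf Pp Kp + Bf Pm Km)/2 \<ge> d * \<bar>cf (X 0 0)\<bar> * \<bar>cg Pp - cg Pm\<bar>"
    using B_conc[OF a1 in0 inP inM X0mid] dd d0 unfolding Bf_def by simp
  have sg: "(\<Sum>i\<in>blk n 0. cg (Y i)) = N * g0" using arg_cong[OF sY, of cg] by (simp add: coord_lin coord_sum g0_def)
  have gap: "cg Pp - cg Pm = (1/3) * ((1 / 2^n) * (\<Sum>j<2^n. \<bar>cg (X n j) - cg (X 0 0)\<bar>))"
  proof -
    have "cg Pp - cg Pm = ((\<Sum>i\<in>blk n 0. Dp i * cg (Y i)) - (\<Sum>i\<in>blk n 0. Dm i * cg (Y i))) / N"
      unfolding Pp_def Pm_def wpt_def Wp Wm by (simp add: coord_lin coord_sum diff_divide_distrib)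
    also have "(\<Sum>i\<in>blk n 0. Dp i * cg (Y i)) - (\<Sum>i\<in>blk n 0. Dm i * cg (Y i)) = 2 * (\<Sum>i\<in>blk n 0. hh i * cg (Y i))"
      unfolding sum_subtractf[symmetric] sum_distrib_left by (intro sum.cong) (auto simp: Dp_def Dm_def algebra_simps)
    also have "(\<Sum>i\<in>blk n 0. hh i * cg (Y i)) = (\<Sum>i\<in>blk n 0. hh i * (cg (Y i) - g0))"
    proof -
      have "(\<Sum>i\<in>blk n 0. hh i * (cg (Y i) - g0)) = (\<Sum>i\<in>blk n 0. hh i * cg (Y i)) - g0 * (\<Sum>i\<in>blk n 0. hh i)"
        by (simp add: algebra_simps sum_subtractf sum_distrib_left)
      then show ?thesis using hh0 by simp
    qed
    also have "\<dots> = (\<Sum>i\<in>blk n 0. \<sigma> i * (cg (Y i) - g0)) - sb * (\<Sum>i\<in>blk n 0. (cg (Y i) - g0))"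
      unfolding hh_def left_diff_distrib by (simp add: sum_subtractf sum_distrib_left right_diff_distrib)
    also have "(\<Sum>i\<in>blk n 0. (cg (Y i) - g0)) = 0" using sg cardB by (simp add: sum_subtractf N_def)
    also have "(\<Sum>i\<in>blk n 0. \<sigma> i * (cg (Y i) - g0)) = (\<Sum>i\<in>blk n 0. \<bar>cg (Y i) - g0\<bar> / 6)"
    proof (intro sum.cong refl)
      fix i
      have "sgn (cg (Y i) - g0) * (cg (Y i) - g0) = \<bar>cg (Y i) - g0\<bar>" by (simp add: sgn_real_def)
      then show "\<sigma> i * (cg (Y i) - g0) = \<bar>cg (Y i) - g0\<bar> / 6" unfolding \<sigma>_def by simp
    qed
    finally show ?thesis unfolding Bn0 Y_def g0_def N_def by (simp add: sum_divide_distrib[symmetric])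
  qed
  have avgB: "(1 / 2^n) * (\<Sum>j<2^n. Bf (X n j) (M n j)) \<le> (Bf Pp Kp + Bf Pm Km)/2"
  proof -
    have "(\<Sum>i\<in>blk n 0. Dp i * Bf (Y i) (ml i)) + (\<Sum>i\<in>blk n 0. Dm i * Bf (Y i) (ml i)) = 2 * (\<Sum>i\<in>blk n 0. Bf (Y i) (ml i))"
      unfolding sum.distrib[symmetric] sum_distrib_left by (intro sum.cong) (auto simp: Dp_def Dm_def algebra_simps)
    then have "2 * (\<Sum>i\<in>blk n 0. Bf (Y i) (ml i)) \<le> N * (Bf Pp Kp + Bf Pm Km)"
      using TP TM unfolding Wp Wm Pp_def Pm_def Kp_def Km_def by (simp add: algebra_simps)
    then show ?thesis unfolding Bn0 Y_def ml_def N_def by (simp add: field_simps)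
  qed
  define E where "E = (1 / 2^n) * (\<Sum>j<2^n. \<bar>cg (X n j) - cg (X 0 0)\<bar>)"
  have E0: "E \<ge> 0" unfolding E_def by (simp add: sum_nonneg)
  define G where "G = d * \<bar>cf (X 0 0)\<bar> * \<bar>cg Pp - cg Pm\<bar>"
  define R where "R = Bf (X 0 0) (M 0 0) - (1 / 2^n) * (\<Sum>j<2^n. Bf (X n j) (M n j))"
  have eq: "d * \<bar>cf (X 0 0)\<bar> * E = 3 * G"
    unfolding G_def gap E_def[symmetric] using E0 by simp
  have GR: "G \<le> R" unfolding G_def R_def using gain avgB by linarith
  have G0: "0 \<le> G" unfolding G_def using d0 by simp
  have fin: "d * \<bar>cf (X 0 0)\<bar> * E \<le> 36 * R" using eq GR G0 by linarith
  then show ?thesis unfolding R_def d_def E_def Bf_def a_def .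
qed


end
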